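(* Let $n\ge3$. Let $g(x)=g(|x|)$ with $g\in C_0^2([0,\infty))$, $\operatorname{supp}g\subset\{|x|\le k\}$ for some $k>0$, and suppose there is $k_0$ with $0<k_0<k$ such that $g(|x|)>0$ for $k_0<|x|<k$. Let $V(x,t)=\frac{t}{\omega_n}\int_{|\omega|=1}g(x+t\omega)\,dS_\omega$, which is radial in $x$; write $V(r,t)$ with $r=|x|$. Set $k_1=\frac{k+k_0}{2}$ and $k_2=k-k_0$. Then there exists a constant $C_{n,g,k}>0$ such that \[ V(r,t)\ge\frac{C_{n,g,k}}{r^{n-2}}\qquad\text{for } t+k_0<r<t+k_1,\ t\ge k_2 . \]
   Context: $\omega_n=2\pi^{n/2}/\Gamma(n/2)$ is the measure of the unit sphere in $\mathbb{R}^n$. *)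

theory Defs
  imports "HOL-Analysis.Analysis"
begin

definition sphere_measure :: "nat \<Rightarrow> real" where
  "sphere_measure n = 2 * pi powr (real n / 2) / Gamma (real n / 2)"

text \<open>Integral of f over the unit sphere S^(n-1) in R^n with respect to surface measure,
  expressed via the cone (polar coordinates) construction of the surface measure:
  the surface measure of A is n times the Lebesgue volume of the cone
  {r w : 0 < r <= 1, w in A}.\<close>
definition sphere_integral :: "(real ^ 'n \<Rightarrow> real) \<Rightarrow> real" where
  "sphere_integral f =
     real CARD('n) * (LINT y : ball 0 1 | lborel. f (y /\<^sub>R norm y))"

definition C2_on_nonneg :: "(real \<Rightarrow> real) \<Rightarrow> bool" where
  "C2_on_nonneg g \<longleftrightarrow> (\<exists>g1 g2.
      (\<forall>s\<ge>0. (g has_real_derivative g1 s) (at s within {0..})) \<and>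
      (\<forall>s\<ge>0. (g1 has_real_derivative g2 s) (at s within {0..})) \<and>
      continuous_on {0..} g2)"

definition Vfun :: "(real \<Rightarrow> real) \<Rightarrow> real ^ 'n \<Rightarrow> real \<Rightarrow> real" where
  "Vfun g x t = t / sphere_measure CARD('n) *
      sphere_integral (\<lambda>w::real ^ 'n. g (norm (x + t *\<^sub>R w)))"

end

theory Submission
  imports Defs
begin



lemma scal:
  fixes zi P N :: real
  assumes "1/2 < zi" "zi < 3/4" "0 < P" "zi^2 + P < 1" "N = sqrt (zi^2 + P)"
  shows "P/2 \<le> 1 - zi/N \<and> 1 - zi/N \<le> 2*P"
proof -
  have N2: "N^2 = zi^2 + P" using assms by simp
  have "sqrt (zi^2) < sqrt (zi^2 + P)" using assms by (intro real_sqrt_less_mono) auto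
  then have Nz: "N > zi" using assms by simp
  have N1: "N < 1" using assms by simp
  have Np: "N > 0" using Nz assms by linarith
  have pos: "N + zi > 0" using Np Nz assms by linarith
  have "(N - zi) * (N + zi) = P" using N2 by (simp add: algebra_simps power2_eq_square)
  then have h: "N - zi = P / (N + zi)" using pos by (simp add: eq_divide_eq)
  have "1 - zi/N = (N - zi)/N" using Np by (simp add: diff_divide_distrib)
  also have "\<dots> = P / (N*(N+zi))" unfolding h by (simp add: mult.commute)
  finally have eq: "1 - zi/N = P / (N*(N+zi))" .
  have "N*(N+zi) \<le> 1*(N+zi)" using N1 Np Nz assms by (intro mult_right_mono) auto
  then have "N*(N+zi) \<le> N+zi" by simp
  then have d1: "N*(N+zi) \<le> 2" using N1 assms by linarith
  have d2: "N*(N+zi) \<ge> 1/2"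
  proof -
    have "N*(N+zi) \<ge> zi*(2*zi)" using Nz assms by (intro mult_mono) auto
    moreover have "zi*(2*zi) \<ge> (1/2)*(2*(1/2))" using assms by (intro mult_mono) auto
    ultimately show ?thesis by linarith
  qed
  have "P/(N*(N+zi)) \<ge> P/2" using d1 d2 assms by (intro divide_left_mono) auto
  moreover have "P/(N*(N+zi)) \<le> P/(1/2)" using d1 d2 assms by (intro divide_left_mono) auto
  ultimately show ?thesis using eq by simp
qed

lemma geo:
  fixes e f y :: "'a::real_inner"
  assumes e: "e \<bullet> e = 1" and f: "f \<bullet> f = 1" and ef: "e \<bullet> f = 0"
    and rho: "0 < \<rho>" "\<rho> \<le> 1/40" and s: "11/20 \<le> s" "s \<le> 13/20"
    and y: "norm (y - (s *\<^sub>R e + (2*\<rho>) *\<^sub>R f)) < \<rho>"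
  shows "1/2 < y \<bullet> e \<and> y \<bullet> e < 3/4 \<and> \<rho>^2 < y \<bullet> y - (y \<bullet> e)^2
         \<and> y \<bullet> y - (y \<bullet> e)^2 < 9*\<rho>^2"
proof -
  define v where "v = y - (s *\<^sub>R e + (2*\<rho>) *\<^sub>R f)"
  have ne: "norm e = 1" using e by (simp add: norm_eq_sqrt_inner)
  have nf: "norm f = 1" using f by (simp add: norm_eq_sqrt_inner)
  have nv: "norm v < \<rho>" using y v_def by simp
  have ve: "\<bar>v \<bullet> e\<bar> < \<rho>" using Cauchy_Schwarz_ineq2[of v e] ne nv by simp
  have yv: "y = s *\<^sub>R e + (2*\<rho>) *\<^sub>R f + v" using v_def by simp
  have ye: "y \<bullet> e = s + v \<bullet> e" using e ef unfolding yv
    by (simp add: inner_add_left inner_commute[of f e])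
  define q where "q = v - (v \<bullet> e) *\<^sub>R e"
  have qq: "q \<bullet> q = v \<bullet> v - (v \<bullet> e)^2" using e unfolding q_def
    by (simp add: inner_diff_left inner_diff_right inner_commute power2_eq_square)
  have nq: "norm q < \<rho>"
  proof -
    have "norm q ^2 \<le> norm v ^2" using qq by (simp add: power2_norm_eq_inner)
    then have "norm q \<le> norm v" using power2_le_imp_le norm_ge_zero by blast
    then show ?thesis using nv by simp
  qed
  have perp: "y - (y \<bullet> e) *\<^sub>R e = (2*\<rho>) *\<^sub>R f + q"
    using e ef unfolding q_def ye yv by (simp add: algebra_simps inner_add_left inner_commute[of f e])
  have P: "y \<bullet> y - (y \<bullet> e)^2 = norm ((2*\<rho>) *\<^sub>R f + q) ^ 2"
  proof -
    have "norm (y - (y \<bullet> e) *\<^sub>R e) ^ 2 = (y - (y \<bullet> e) *\<^sub>R e) \<bullet> (y - (y \<bullet> e) *\<^sub>R e)"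
      by (rule power2_norm_eq_inner)
    also have "\<dots> = y \<bullet> y - (y \<bullet> e)^2"
      using e by (simp add: inner_diff_left inner_diff_right inner_commute power2_eq_square)
    finally have "norm (y - (y \<bullet> e) *\<^sub>R e) ^ 2 = y \<bullet> y - (y \<bullet> e)^2" .
    then show ?thesis using perp by simp
  qed
  have n1: "norm ((2*\<rho>) *\<^sub>R f + q) \<le> 2*\<rho> + norm q"
    using norm_triangle_ineq[of "(2*\<rho>) *\<^sub>R f" q] nf rho by simp
  have n2: "norm ((2*\<rho>) *\<^sub>R f + q) \<ge> 2*\<rho> - norm q"
    using norm_diff_ineq[of "(2*\<rho>) *\<^sub>R f" q] nf rho by simp
  have lo: "\<rho> < norm ((2*\<rho>) *\<^sub>R f + q)" using n2 nq by linarith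
  have hi: "norm ((2*\<rho>) *\<^sub>R f + q) < 3*\<rho>" using n1 nq by linarith
  have "\<rho>^2 < norm ((2*\<rho>) *\<^sub>R f + q) ^ 2" using lo rho by (intro power_strict_mono) auto
  moreover have "norm ((2*\<rho>) *\<^sub>R f + q) ^ 2 < (3*\<rho>)^2" using hi by (intro power_strict_mono) auto
  ultimately show ?thesis using ye ve s rho P by (auto simp: power_mult_distrib)
qed

lemma point:
  fixes e f y x :: "'a::real_inner"
  assumes e: "e \<bullet> e = 1" and f: "f \<bullet> f = 1" and ef: "e \<bullet> f = 0"
    and rho: "0 < \<rho>" "\<rho> \<le> 1/40" and s: "11/20 \<le> s" "s \<le> 13/20"
    and y: "norm (y - (s *\<^sub>R e + (2*\<rho>) *\<^sub>R f)) < \<rho>"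
    and x: "x = - (r *\<^sub>R e)" and r: "r > 0" and t: "t > 0"
  shows "norm y < 1 \<and> (r-t)^2 + t*r*\<rho>^2 \<le> norm (x + t *\<^sub>R (y /\<^sub>R norm y))^2
       \<and> norm (x + t *\<^sub>R (y /\<^sub>R norm y))^2 \<le> (r-t)^2 + 36*t*r*\<rho>^2"
proof -
  define zi where "zi = y \<bullet> e"
  define P where "P = y \<bullet> y - zi^2"
  define N where "N = norm y"
  have G: "1/2 < zi" "zi < 3/4" "\<rho>^2 < P" "P < 9*\<rho>^2"
    using geo[OF e f ef rho s y] unfolding zi_def P_def by auto
  have "0 < \<rho>^2" using rho by simp
  then have Pp: "0 < P" using G by linarith
  have "zi^2 < (3/4)^2" using G by (intro power_strict_mono) auto
  moreover have "9*\<rho>^2 \<le> 9*(1/40)^2" using rho by (intro mult_left_mono power_mono) auto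
  ultimately have lt1: "zi^2 + P < 1" using G by (simp add: power2_eq_square)
  have Nd: "N = sqrt (zi^2 + P)" unfolding N_def P_def by (simp add: norm_eq_sqrt_inner)
  have sc: "P/2 \<le> 1 - zi/N \<and> 1 - zi/N \<le> 2*P" using scal[OF G(1,2) Pp lt1 Nd] .
  have N1: "N < 1" using Nd lt1 by simp
  have "0 < zi^2 + P" using Pp by (simp add: add_nonneg_pos)
  then have Np: "N > 0" using Nd by simp
  have uu: "(y /\<^sub>R N) \<bullet> (y /\<^sub>R N) = 1"
    using Np unfolding N_def by (simp add: power2_norm_eq_inner[symmetric] power2_eq_square)
  have ue: "(y /\<^sub>R N) \<bullet> e = zi / N" unfolding zi_def by (simp add: divide_inverse mult.commute)
  have D: "norm (x + t *\<^sub>R (y /\<^sub>R N))^2 = (r-t)^2 + 2*t*r*(1 - zi/N)"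
  proof -
    have "norm (x + t *\<^sub>R (y /\<^sub>R N))^2 = (x + t *\<^sub>R (y /\<^sub>R N)) \<bullet> (x + t *\<^sub>R (y /\<^sub>R N))"
      by (simp add: power2_norm_eq_inner)
    also have "\<dots> = r^2 * (e \<bullet> e) - 2*r*t*((y /\<^sub>R N) \<bullet> e) + t^2 * ((y /\<^sub>R N) \<bullet> (y /\<^sub>R N))"
      unfolding x by (simp add: inner_add_left inner_add_right inner_commute power2_eq_square algebra_simps)
    also have "\<dots> = (r-t)^2 + 2*t*r*(1 - zi/N)" using e uu ue by (simp add: power2_eq_square algebra_simps)
    finally show ?thesis .
  qed
  have trp: "t*r > 0" using t r by simp
  have "2*t*r*(1 - zi/N) \<ge> 2*t*r*(P/2)" using sc trp by (intro mult_left_mono) (auto simp: mult.commute)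
  moreover have "2*t*r*(P/2) \<ge> t*r*\<rho>^2"
  proof -
    have "t*r*\<rho>^2 \<le> t*r*P" using G trp by (intro mult_left_mono) auto
    then show ?thesis by simp
  qed
  moreover have "2*t*r*(1 - zi/N) \<le> 2*t*r*(2*P)" using sc trp by (intro mult_left_mono) (auto simp: mult.commute)
  moreover have "2*t*r*(2*P) \<le> 36*t*r*\<rho>^2"
  proof -
    have "t*r*(4*P) \<le> t*r*(36*\<rho>^2)" using G trp by (intro mult_left_mono) auto
    then show ?thesis by (simp add: algebra_simps)
  qed
  ultimately show ?thesis using D N1 unfolding N_def by linarith
qed

lemma g_cont:
  assumes "C2_on_nonneg g" shows "continuous_on {0..} g"
proof -
  obtain g1 where "\<forall>s\<ge>0. (g has_real_derivative g1 s) (at s within {0..})"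
    using assms unfolding C2_on_nonneg_def by blast
  then show ?thesis unfolding continuous_on_eq_continuous_within
    by (auto intro: DERIV_continuous)
qed

lemma g_at_k:
  fixes g :: "real \<Rightarrow> real"
  assumes "continuous_on {0..} g" "k > 0" "\<forall>s\<ge>0. s > k \<longrightarrow> g s = 0"
  shows "g k = 0"
proof -
  have "(g \<longlongrightarrow> g k) (at k within {0..})" using assms(1,2)
    by (simp add: continuous_on_def)
  then have "(g \<longlongrightarrow> g k) (at_right k)"
    by (rule tendsto_within_subset) (use assms(2) in auto)
  moreover have "(g \<longlongrightarrow> 0) (at_right k)"
  proof (rule tendsto_eventually)
    show "\<forall>\<^sub>F x in at_right k. g x = 0"
      unfolding eventually_at_right_field using assms(2,3)
      by (intro exI[of _ "k+1"]) auto
  qed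
  ultimately show ?thesis using tendsto_unique trivial_limit_at_right_real by blast
qed


lemma norm_unit_le: "norm (y /\<^sub>R norm y) \<le> (1::real)"
  for y :: "'a::real_normed_vector"
  by (cases "y = 0") auto

lemma meas_f:
  fixes g :: "real \<Rightarrow> real" and x :: "'a::euclidean_space"
  assumes gc: "continuous_on {0..} g"
  shows "(\<lambda>y. g (norm (x + t *\<^sub>R (y /\<^sub>R norm y)))) \<in> borel_measurable lborel"
proof -
  define gg where "gg s = g (max 0 s)" for s
  have "continuous_on UNIV gg" unfolding gg_def
    by (rule continuous_on_compose2[OF gc]) (auto intro!: continuous_intros)
  then have gm: "gg \<in> borel_measurable borel" by (rule borel_measurable_continuous_onI)
  have hm: "(\<lambda>y. norm (x + t *\<^sub>R (y /\<^sub>R norm y))) \<in> borel_measurable lborel"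
    by measurable
  have "(\<lambda>y. gg (norm (x + t *\<^sub>R (y /\<^sub>R norm y)))) \<in> borel_measurable lborel"
    using measurable_compose[OF hm gm] by (simp add: o_def)
  then show ?thesis unfolding gg_def by simp
qed



theorem lemma7p2:
  fixes g :: "real \<Rightarrow> real" and k k0 :: real
  assumes n3: "CARD('n) \<ge> 3"
    and C2: "C2_on_nonneg g"
    and kpos: "k > 0"
    and supp: "\<forall>s\<ge>0. s > k \<longrightarrow> g s = 0"
    and k0: "0 < k0" "k0 < k"
    and gpos: "\<forall>s. k0 < s \<and> s < k \<longrightarrow> g s > 0"
  shows "\<exists>C>0. \<forall>(x::real ^ 'n) t.
           t \<ge> k - k0 \<and> t + k0 < norm x \<and> norm x < t + (k + k0) / 2 \<longrightarrow>
           Vfun g x t \<ge> C / norm x ^ (CARD('n) - 2)"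
proof -
  have gc: "continuous_on {0..} g" using g_cont[OF C2] .
  have gk: "g k = 0" using g_at_k[OF gc kpos supp] .
  define k1 where "k1 = (k+k0)/2"
  define k2 where "k2 = k - k0"
  define \<theta> where "\<theta> = k2/(k2+k1)"
  define \<delta> where "\<delta> = min (min (1/40) (k/40)) ((k-k1)/12)"
  define \<delta>' where "\<delta>' = \<delta>*k/(1+k)"
  define L where "L = k0^2 + \<theta>*\<delta>'^2"
  define U where "U = k1^2 + 36*\<delta>^2"
  have k1: "k0 < k1" "k1 < k" using k0 unfolding k1_def by auto
  have k2p: "k2 > 0" using k0 unfolding k2_def by auto
  have \<theta>: "0 < \<theta>" "\<theta> \<le> 1" using k1 k2p k0 unfolding \<theta>_def by auto
  have \<delta>: "0 < \<delta>" "\<delta> \<le> 1/40" "\<delta> \<le> k/40" "\<delta> \<le> (k-k1)/12" using kpos k1 unfolding \<delta>_def by (auto simp: min_def)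
  have \<delta>': "0 < \<delta>'" "\<delta>' \<le> \<delta>" using \<delta> kpos unfolding \<delta>'_def by (auto simp: field_simps)
  have kL: "k0^2 < L" using \<theta> \<delta>' unfolding L_def by simp
  have LU: "L \<le> U"
  proof -
    have "k0^2 \<le> k1^2" using k1 k0 by (intro power_mono) auto
    moreover have "\<theta>*\<delta>'^2 \<le> 1*\<delta>'^2" using \<theta> by (intro mult_right_mono) auto
    moreover have "\<delta>'^2 \<le> \<delta>^2" using \<delta>' by (intro power_mono) auto
    moreover have "0 \<le> \<delta>^2" by simp
    ultimately show ?thesis unfolding L_def U_def by linarith
  qed
  have Uk: "U < k^2"
  proof -
    have "\<delta>^2 \<le> ((k-k1)/12)^2" using \<delta> by (intro power_mono) auto
    moreover have "36*((k-k1)/12)^2 < k^2 - k1^2"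
    proof -
      have "(k-k1)*((k-k1)/4) < (k-k1)*(k+k1)" using k1 k0 by (intro mult_strict_left_mono) auto
      moreover have "36*((k-k1)/12)^2 = (k-k1)*((k-k1)/4)" by (simp add: power2_eq_square)
      moreover have "k^2 - k1^2 = (k-k1)*(k+k1)" by (simp add: power2_eq_square algebra_simps)
      ultimately show ?thesis by simp
    qed
    ultimately show ?thesis unfolding U_def by linarith
  qed
  define a0 where "a0 = sqrt L"
  define b0 where "b0 = sqrt U"
  have a0: "k0 < a0" unfolding a0_def using kL by (simp add: real_less_rsqrt)
  have b0: "b0 < k" unfolding b0_def using Uk kpos by (metis abs_of_pos real_sqrt_abs real_sqrt_less_mono)
  have ab: "a0 \<le> b0" unfolding a0_def b0_def using LU by simp
  have gcab: "continuous_on {a0..b0} g" using a0 k0 by (intro continuous_on_subset[OF gc]) auto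
  obtain s0 where s0: "s0 \<in> {a0..b0}" "\<And>s. s \<in> {a0..b0} \<Longrightarrow> g s0 \<le> g s"
    using continuous_attains_inf[OF compact_Icc _ gcab] ab by auto
  define m where "m = g s0"
  have mpos: "m > 0" unfolding m_def using gpos s0(1) a0 b0 by auto
  have mle: "\<And>s. a0 \<le> s \<Longrightarrow> s \<le> b0 \<Longrightarrow> m \<le> g s" unfolding m_def using s0(2) by auto
  define \<omega> where "\<omega> = sphere_measure CARD('n)"
  have \<omega>: "\<omega> > 0" unfolding \<omega>_def sphere_measure_def by simp
  define V0 where "V0 = unit_ball_vol (real CARD('n))"
  have V0: "V0 > 0" unfolding V0_def by simp
  define M0 where "M0 = V0 * \<delta>^CARD('n) * (k/(1+k))^(CARD('n)-1)"
  have M0: "M0 > 0" unfolding M0_def using V0 \<delta> kpos by simp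
  define C where "C = \<theta> * (real CARD('n) * m * M0 / \<omega>)"
  have Cpos: "C > 0" unfolding C_def using \<theta> mpos M0 \<omega> by simp
  show ?thesis
  proof (intro exI[of _ C] conjI allI impI Cpos)
    fix x :: "real^'n" and t :: real
    assume H: "k - k0 \<le> t \<and> t + k0 < norm x \<and> norm x < t + (k + k0) / 2"
    define r where "r = norm x"
    have tpos: "t > 0" and rk: "r > k" and rt1: "r - t > k0" and rt2: "r - t < k1" and tk2: "t \<ge> k2"
      using H k0 unfolding r_def k1_def k2_def by (auto simp: field_simps)
    have rpos: "r > 0" using rk kpos by simp
    have tr: "t < r" using rt1 k0 by simp
    have t\<theta>: "\<theta> \<le> t / r"
    proof -
      have "k2 * r \<le> k2 * (t + k1)" using rt2 k2p by (intro mult_left_mono) auto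
      moreover have "k2 * k1 \<le> t * k1" using tk2 k1 k0 by (intro mult_right_mono) auto
      ultimately have "k2 * r \<le> t*(k2+k1)" by (simp add: algebra_simps)
      then show ?thesis unfolding \<theta>_def using k2p k1 k0 rpos by (simp add: field_simps)
    qed

    obtain i0 :: 'n where True by blast
    have "(UNIV :: 'n set) \<noteq> {i0}"
    proof
      assume "(UNIV::'n set) = {i0}"
      then have "card (UNIV::'n set) = card {i0}" by (rule arg_cong[where f=card])
      then show False using n3 by simp
    qed
    then obtain j :: 'n where ji: "j \<noteq> i0" by blast
    define e where "e = - (x /\<^sub>R r)"
    have ne: "norm e = 1" unfolding e_def using rpos r_def by simp
    have nae: "norm (axis i0 (1::real)) = norm e" using ne by simp
    obtain Q where Q: "orthogonal_transformation Q" "Q (axis i0 (1::real)) = e"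
      by (rule orthogonal_transformation_exists[OF nae])
    define f where "f = Q (axis j 1)"
    have Qi: "\<And>v w. Q v \<bullet> Q w = v \<bullet> w" using Q(1) unfolding orthogonal_transformation_def by blast
    have ee: "e \<bullet> e = 1" using Qi[of "axis i0 1" "axis i0 1"] Q(2) by (simp add: inner_axis_axis inner_real_def)
    have ff: "f \<bullet> f = 1" unfolding f_def using Qi[of "axis j 1" "axis j 1"] by (simp add: inner_axis_axis inner_real_def)
    have ef: "e \<bullet> f = 0" unfolding f_def using Qi[of "axis i0 1" "axis j 1"] Q(2) ji
      by (simp add: inner_axis_axis inner_real_def)
    have xe: "x = - (r *\<^sub>R e)" unfolding e_def using rpos by simp
    define N where "N = nat \<lceil>r\<rceil>"
    have cge: "0 \<le> \<lceil>r\<rceil>" using rpos by simp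
    have ceq: "real N = of_int \<lceil>r\<rceil>" unfolding N_def using cge by simp
    have N1: "r \<le> real N" using ceq by simp
    have N2: "real N \<le> r + 1" using ceq by simp
    have Npos: "real N > 0" using N1 rpos by linarith
    have Nge1: "(1::real) \<le> real N" using Npos by (simp add: Suc_leI)
    have Nk: "k * real N \<le> (1+k) * r"
    proof -
      have "k * real N \<le> k * (r + 1)" using N2 kpos by (intro mult_left_mono) auto
      then show ?thesis using rk by (simp add: algebra_simps)
    qed
    define \<rho> where "\<rho> = \<delta> / real N"
    have \<rho>pos: "0 < \<rho>" unfolding \<rho>_def using \<delta> Npos by simp
    have \<rho>1: "\<rho> \<le> \<delta> / r" unfolding \<rho>_def using \<delta> N1 rpos by (intro divide_left_mono) auto
    have \<rho>3: "\<rho> \<le> 1/40"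
    proof -
      have "\<rho> \<le> \<delta> / 1" unfolding \<rho>_def using \<delta> Nge1 by (intro divide_left_mono) auto
      then show ?thesis using \<delta> by simp
    qed
    define q where "q = k / ((1+k) * r)"
    have q0: "0 \<le> q" unfolding q_def using kpos rpos by simp
    have qN: "q \<le> 1 / real N"
    proof -
      have pos: "(1+k)*r > 0" using kpos rpos by simp
      have "k \<le> ((1+k)*r) / real N" using Nk Npos by (simp add: pos_le_divide_eq)
      then have "k \<le> (1 / real N) * ((1+k)*r)" by simp
      then show ?thesis unfolding q_def by (simp add: pos_divide_le_eq[OF pos])
    qed
    have \<rho>2: "\<delta>' / r \<le> \<rho>"
    proof -
      have "\<delta>' / r = \<delta> * q" unfolding \<delta>'_def q_def by (simp add: field_simps)
      also have "\<dots> \<le> \<delta> * (1 / real N)" using qN \<delta> by (intro mult_left_mono) auto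
      finally show ?thesis unfolding \<rho>_def by simp
    qed
    define c where "c i = (11/20 + 4*\<rho>*real i) *\<^sub>R e + (2*\<rho>) *\<^sub>R f" for i :: nat
    define S where "S = (\<Union>i\<in>{..<N}. ball (c i) \<rho>)"
    have sbound: "11/20 \<le> 11/20 + 4*\<rho>*real i \<and> 11/20 + 4*\<rho>*real i \<le> 13/20" if "i < N" for i
    proof -
      have "4*\<rho>*real i \<le> 4*\<rho>*real N" using that \<rho>pos by (intro mult_left_mono) auto
      moreover have "4*\<rho>*real N = 4*\<delta>" unfolding \<rho>_def using Npos by simp
      moreover have "0 \<le> 4*\<rho>*real i" using \<rho>pos by simp
      ultimately show ?thesis using \<delta> by linarith
    qed
    have key: "norm y < 1 \<and> m \<le> g (norm (x + t *\<^sub>R (y /\<^sub>R norm y)))" if "y \<in> S" for y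
    proof -
      from that obtain i where i: "i < N" "y \<in> ball (c i) \<rho>" unfolding S_def by auto
      have yd: "norm (y - ((11/20 + 4*\<rho>*real i) *\<^sub>R e + (2*\<rho>) *\<^sub>R f)) < \<rho>"
        using i(2) unfolding c_def by (simp add: dist_norm norm_minus_commute)
      have P: "norm y < 1 \<and> (r-t)^2 + t*r*\<rho>^2 \<le> norm (x + t *\<^sub>R (y /\<^sub>R norm y))^2
         \<and> norm (x + t *\<^sub>R (y /\<^sub>R norm y))^2 \<le> (r-t)^2 + 36*t*r*\<rho>^2"
        using point[OF ee ff ef \<rho>pos \<rho>3 _ _ yd xe rpos tpos] sbound[OF i(1)] by blast
      define w where "w = norm (x + t *\<^sub>R (y /\<^sub>R norm y))"
      have trp: "0 < t * r" using tpos rpos by simp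
      have tr1: "t / r \<le> 1" using tr rpos by simp
      have e1: "k0^2 \<le> (r-t)^2" using rt1 k0 by (intro power_mono) auto
      have e2: "(r-t)^2 \<le> k1^2" using rt2 rt1 k0 by (intro power_mono) auto
      have e3: "\<theta>*\<delta>'^2 \<le> t*r*\<rho>^2"
      proof -
        have "(\<delta>'/r)^2 \<le> \<rho>^2" using \<rho>2 \<delta>' rpos by (intro power_mono) auto
        then have "t*r*(\<delta>'/r)^2 \<le> t*r*\<rho>^2" using trp by (intro mult_left_mono) auto
        moreover have "t*r*(\<delta>'/r)^2 = (t/r) * \<delta>'^2" using rpos by (simp add: power2_eq_square field_simps)
        moreover have "\<theta>*\<delta>'^2 \<le> (t/r) * \<delta>'^2" using t\<theta> by (intro mult_right_mono) auto
        ultimately show ?thesis by linarith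
      qed
      have e4: "36*t*r*\<rho>^2 \<le> 36*\<delta>^2"
      proof -
        have "\<rho>^2 \<le> (\<delta>/r)^2" using \<rho>1 \<rho>pos by (intro power_mono) auto
        then have "t*r*\<rho>^2 \<le> t*r*(\<delta>/r)^2" using trp by (intro mult_left_mono) auto
        moreover have "t*r*(\<delta>/r)^2 = (t/r) * \<delta>^2" using rpos by (simp add: power2_eq_square field_simps)
        moreover have "(t/r) * \<delta>^2 \<le> 1 * \<delta>^2" using tr1 by (intro mult_right_mono) auto
        ultimately show ?thesis by linarith
      qed
      have wL: "L \<le> w^2" using P e1 e3 unfolding L_def w_def by linarith
      have wU: "w^2 \<le> U" using P e2 e4 unfolding U_def w_def by linarith
      have w0: "0 \<le> w" unfolding w_def by simp
      have "a0 \<le> w" unfolding a0_def using wL w0 by (metis real_sqrt_abs real_sqrt_le_mono abs_of_nonneg)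
      moreover have "w \<le> b0" unfolding b0_def using wU w0 by (metis real_sqrt_abs real_sqrt_le_mono abs_of_nonneg)
      ultimately have "m \<le> g w" by (rule mle)
      then show ?thesis using P unfolding w_def by simp
    qed
    have nonneg: "0 \<le> g (norm (x + t *\<^sub>R (y /\<^sub>R norm y)))" for y :: "real^'n"
    proof -
      define s where "s = norm (x + t *\<^sub>R (y /\<^sub>R norm y))"
      have "norm x - norm (t *\<^sub>R (y /\<^sub>R norm y)) \<le> s" unfolding s_def by (rule norm_diff_ineq)
      moreover have "norm (t *\<^sub>R (y /\<^sub>R norm y)) \<le> t"
        using norm_unit_le[of y] tpos by (simp add: mult_left_le)
      ultimately have sk0: "s > k0" using rt1 unfolding r_def by linarith
      have "0 \<le> g s"
      proof (cases "s < k")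
        case True then show ?thesis using gpos sk0 by (simp add: less_imp_le)
      next
        case False
        show ?thesis
        proof (cases "s = k")
          case True then show ?thesis using gk by simp
        next
          case False2: False
          then have "s > k" using False by simp
          then show ?thesis using supp sk0 k0 by simp
        qed
      qed
      then show ?thesis unfolding s_def .
    qed
    obtain B where B: "\<And>y. \<bar>g (norm (x + t *\<^sub>R (y /\<^sub>R norm y)))\<bar> \<le> B" for y :: "real^'n"
    proof -
      have "continuous_on {0..r+t} (\<lambda>s. \<bar>g s\<bar>)"
        by (intro continuous_intros continuous_on_subset[OF gc]) auto
      then obtain s1 where s1: "\<forall>s\<in>{0..r+t}. \<bar>g s\<bar> \<le> \<bar>g s1\<bar>"
        using continuous_attains_sup[OF compact_Icc, of 0 "r+t" "\<lambda>s. \<bar>g s\<bar>"] rpos tpos by auto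
      have "\<bar>g (norm (x + t *\<^sub>R (y /\<^sub>R norm y)))\<bar> \<le> \<bar>g s1\<bar>" for y :: "real^'n"
      proof (rule s1[rule_format])
        have "norm (x + t *\<^sub>R (y /\<^sub>R norm y)) \<le> norm x + norm (t *\<^sub>R (y /\<^sub>R norm y))"
          by (rule norm_triangle_ineq)
        moreover have "norm (t *\<^sub>R (y /\<^sub>R norm y)) \<le> t"
          using norm_unit_le[of y] tpos by (simp add: mult_left_le)
        ultimately show "norm (x + t *\<^sub>R (y /\<^sub>R norm y)) \<in> {0..r+t}" unfolding r_def by auto
      qed
      then show ?thesis using that by blast
    qed
    define F where "F y = indicator (ball (0::real^'n) 1) y *\<^sub>R g (norm (x + t *\<^sub>R (y /\<^sub>R norm y)))" for y
    have intF: "integrable lborel F" unfolding F_def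
      by (rule integrableI_bounded_set_indicator[where B=B])
         (use meas_f[OF gc] emeasure_lborel_ball_finite B in auto)
    have Fnn: "0 \<le> F y" for y unfolding F_def using nonneg[of y] by (simp add: indicator_def)
    have lowF: "m * indicator S y \<le> F y" for y
    proof (cases "y \<in> S")
      case True
      then show ?thesis using key[OF True] unfolding F_def by (simp add: dist_norm)
    next
      case False
      then show ?thesis using Fnn[of y] by simp
    qed
    have I1: "m * measure lborel S \<le> integral\<^sup>L lborel F"
    proof -
      have "integral\<^sup>L lborel (\<lambda>y. m * indicator S y) \<le> integral\<^sup>L lborel F"
        by (rule integral_mono'[OF intF]) (use lowF Fnn in auto)
      then show ?thesis by simp
    qed

    have disj: "disjoint_family_on (\<lambda>i. ball (c i) \<rho>) {..<N}"
      unfolding disjoint_family_on_def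
    proof (intro ballI impI)
      fix i j' assume ij: "i \<in> {..<N}" "j' \<in> {..<N}" "i \<noteq> j'"
      show "ball (c i) \<rho> \<inter> ball (c j') \<rho> = {}"
      proof (rule ccontr)
        assume "ball (c i) \<rho> \<inter> ball (c j') \<rho> \<noteq> {}"
        then obtain y where y: "dist (c i) y < \<rho>" "dist (c j') y < \<rho>" by auto
        have "dist (c i) (c j') \<le> dist (c i) y + dist y (c j')" by (rule dist_triangle)
        then have d1: "dist (c i) (c j') < 2*\<rho>" using y by (simp add: dist_commute)
        have "c i - c j' = (4*\<rho>*(real i - real j')) *\<^sub>R e" unfolding c_def
          by (simp add: algebra_simps)
        then have d2: "dist (c i) (c j') = 4*\<rho>*\<bar>real i - real j'\<bar>"
          using ne \<rho>pos by (simp add: dist_norm abs_mult)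
        have "1 \<le> \<bar>real i - real j'\<bar>"
        proof (cases "i < j'")
          case True
          then have "real (Suc i) \<le> real j'" by (simp only: of_nat_le_iff Suc_leI)
          then show ?thesis by simp
        next
          case False
          then have "j' < i" using ij(3) by simp
          then have "real (Suc j') \<le> real i" by (simp only: of_nat_le_iff Suc_leI)
          then show ?thesis by simp
        qed
        then have "4*\<rho>*1 \<le> 4*\<rho>*\<bar>real i - real j'\<bar>" using \<rho>pos by (intro mult_left_mono) auto
        then show False using d1 d2 \<rho>pos by simp
      qed
    qed
    have mS: "measure lborel S = real N * (V0 * \<rho>^CARD('n))"
    proof -
      have "measure lborel S = (\<Sum>i<N. measure lborel (ball (c i) \<rho>))"
        unfolding S_def
        by (rule measure_finite_Union) (use disj emeasure_lborel_ball_finite in \<open>auto simp: less_top\<close>)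
      also have "\<dots> = (\<Sum>i<N. V0 * \<rho>^CARD('n))"
      proof (rule sum.cong[OF refl])
        fix i
        have "measure lborel (ball (c i) \<rho>) = unit_ball_vol (real DIM(real^'n)) * \<rho>^DIM(real^'n)"
          by (rule content_ball) (use \<rho>pos in simp)
        then show "measure lborel (ball (c i) \<rho>) = V0 * \<rho>^CARD('n)" unfolding V0_def by simp
      qed
      finally show ?thesis by simp
    qed
    have n1: "CARD('n) = Suc (CARD('n) - 1)" using n3 by simp
    have n2: "CARD('n) - 1 = Suc (CARD('n) - 2)" using n3 by simp
    have mS2: "M0 / r^(CARD('n)-1) \<le> measure lborel S"
    proof -
      have "real N * \<rho>^CARD('n) = \<delta>^CARD('n) * (1 / real N)^(CARD('n)-1)"
      proof -
        have "real N * \<rho>^CARD('n) = real N * (\<delta>^CARD('n) / real N^CARD('n))"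
          unfolding \<rho>_def by (simp add: power_divide)
        also have "real N^CARD('n) = real N * real N^(CARD('n)-1)"
          by (metis n1 power_Suc)
        finally show ?thesis using Npos by (simp add: power_one_over)
      qed
      moreover have "q^(CARD('n)-1) \<le> (1 / real N)^(CARD('n)-1)"
        using q0 qN by (intro power_mono) auto
      moreover have "M0 / r^(CARD('n)-1) = V0 * \<delta>^CARD('n) * q^(CARD('n)-1)"
      proof -
        have "q = (k/(1+k))/r" unfolding q_def by simp
        then have "q^(CARD('n)-1) = (k/(1+k))^(CARD('n)-1) / r^(CARD('n)-1)" by (simp only: power_divide)
        then show ?thesis unfolding M0_def by simp
      qed
      ultimately show ?thesis unfolding mS using V0 \<delta>
        by (simp add: mult_left_mono mult.assoc)
    qed
    have I: "m * M0 / r^(CARD('n)-1) \<le> integral\<^sup>L lborel F"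
    proof -
      have "m * (M0 / r^(CARD('n)-1)) \<le> m * measure lborel S" using mS2 mpos by (intro mult_left_mono) auto
      then show ?thesis using I1 by simp
    qed
    have Veq: "Vfun g x t = t / \<omega> * (real CARD('n) * integral\<^sup>L lborel F)"
      unfolding Vfun_def sphere_integral_def set_lebesgue_integral_def F_def \<omega>_def by simp
    have "t / \<omega> * (real CARD('n) * (m * M0 / r^(CARD('n)-1))) \<le> t / \<omega> * (real CARD('n) * integral\<^sup>L lborel F)"
      using I tpos \<omega> by (intro mult_left_mono) auto
    moreover have "t / \<omega> * (real CARD('n) * (m * M0 / r^(CARD('n)-1)))
        = (t / r) * (real CARD('n) * m * M0 / \<omega>) / r^(CARD('n)-2)"
    proof -
      have "r^(CARD('n)-1) = r * r^(CARD('n)-2)" by (metis n2 power_Suc)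
      then show ?thesis using rpos \<omega> by (simp add: field_simps)
    qed
    moreover have "\<theta> * (real CARD('n) * m * M0 / \<omega>) / r^(CARD('n)-2)
        \<le> (t / r) * (real CARD('n) * m * M0 / \<omega>) / r^(CARD('n)-2)"
      using t\<theta> mpos M0 \<omega> rpos by (intro divide_right_mono mult_right_mono) auto
    ultimately show "C / norm x ^ (CARD('n) - 2) \<le> Vfun g x t"
      unfolding Veq C_def r_def[symmetric] by linarith
  qed
qed


end
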